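(* Let $k$ be an imaginary quadratic field, and $\Gamma$ an arithmetic Kleinian group derived from a quaternion algebra over $k$. Then there exist $L,\epsilon>0$ such that if $\gamma\in\Gamma$ is a loxodromic element with $\ell(\gamma)>L$ and $0\le\mathrm{hol}(\gamma)<\epsilon$, then $\gamma^2$ realizes the systole of $\Gamma(\mathrm{tr}(\gamma))\backslash\mathbb{H}^3$, i.e. $\ell(\gamma^2)$ equals the minimal translation length of loxodromic elements of $\Gamma(\mathrm{tr}(\gamma))$.
   Context: $\Gamma<\mathrm{PSL}(2,\mathbb{C})$ is derived from a quaternion algebra over $k$ if there are a quaternion algebra $\mathcal{A}$ over $k$ ramified at all real places, an order $\mathcal{O}\subset\mathcal{A}$ and a $k$-embedding $\rho:\mathcal{A}\to M_2(\mathbb{C})$ with $\Gamma\subset\rho(\mathcal{O}^1)/\{\pm I\}$, where $\mathcal{O}^1$ is the group of reduced-norm-one elements. For an ideal $J\subset\mathcal{O}_k$, $\mathcal{O}^1(J)=\{g\in\mathcal{O}^1: g-1\in J\mathcal{O}\}$, and $\Gamma(J)$ is the image in $\Gamma$ of $\tilde\Gamma\cap\rho(\mathcal{O}^1(J))$, $\tilde\Gamma$ being the preimage of $\Gamma$ in $\mathrm{SL}(2,\mathbb{C})$; $\Gamma(t)$ means $\Gamma(t\mathcal{O}_k)$. For $\gamma=\pm\begin{pmatrix}a&b\\c&d\end{pmatrix}$, $\mathrm{tr}(\gamma)=\mu(a+d)$ with $\mu\in\{\pm1\}$ chosen so that $\mathrm{tr}(\gamma)=re^{i\theta}$, $r\ge0$,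 $\theta\in[0,\pi)$. If $\gamma$ is loxodromic and $\lambda_\gamma$ is its eigenvalue (for a lift) of modulus $>1$, then $\ell(\gamma)=2\log|\lambda_\gamma|$ is its translation length and $\mathrm{hol}(\gamma)=2\mathrm{Arg}(\lambda_\gamma)$ its holonomy, with $\mathrm{Arg}\in(-\pi,\pi)$. *)

theory Defs
  imports "HOL-Analysis.Analysis" "HOL-Computational_Algebra.Polynomial"
begin

type_synonym mat2 = "complex^2^2"

definition imag_quad_field :: "nat \<Rightarrow> complex set" where
  "imag_quad_field d = {of_rat a + of_rat b * \<i> * complex_of_real (sqrt (real d)) | a b. True}"

definition ring_of_integers :: "complex set \<Rightarrow> complex set" where
  "ring_of_integers k = {x \<in> k. algebraic_int x}"

definition smult2 :: "complex \<Rightarrow> mat2 \<Rightarrow> mat2" where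
  "smult2 c A = (\<chi> i j. c * A $ i $ j)"

definition tr2 :: "mat2 \<Rightarrow> complex" where
  "tr2 A = A $ 1 $ 1 + A $ 2 $ 2"

definition lin_comb :: "complex list \<Rightarrow> mat2 list \<Rightarrow> mat2" where
  "lin_comb cs bs = (\<Sum>i<length bs. smult2 (cs ! i) (bs ! i))"

definition span_over :: "complex set \<Rightarrow> mat2 list \<Rightarrow> mat2 set" where
  "span_over R bs = {lin_comb cs bs | cs. length cs = length bs \<and> set cs \<subseteq> R}"

text \<open>The image rho(A) of a quaternion algebra A over k under a k-embedding
  rho : A -> M_2(C): a k-subalgebra of M_2(C) with a k-basis of 4 elements which is
  C-linearly independent (so rho extends to A (x)_k C = M_2(C)).  Since k is imaginary
  quadratic it has no real places, so "ramified at all real places" is vacuous.\<close>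
definition quaternion_subalgebra :: "complex set \<Rightarrow> mat2 set \<Rightarrow> bool" where
  "quaternion_subalgebra k B \<longleftrightarrow>
     (\<exists>bs. length bs = 4 \<and> B = span_over k bs \<and>
        (\<forall>cs. length cs = 4 \<and> lin_comb cs bs = 0 \<longrightarrow> (\<forall>c\<in>set cs. c = 0))) \<and>
     mat 1 \<in> B \<and> (\<forall>x\<in>B. \<forall>y\<in>B. x ** y \<in> B)"

definition is_order :: "complex set \<Rightarrow> mat2 set \<Rightarrow> mat2 set \<Rightarrow> bool" where
  "is_order k B Ord \<longleftrightarrow> Ord \<subseteq> B \<and> mat 1 \<in> Ord \<and>
     (\<forall>x\<in>Ord. \<forall>y\<in>Ord. x + y \<in> Ord \<and> x - y \<in> Ord \<and> x ** y \<in> Ord) \<and>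
     (\<forall>c\<in>ring_of_integers k. \<forall>x\<in>Ord. smult2 c x \<in> Ord) \<and>
     (\<exists>gs. Ord = span_over (ring_of_integers k) gs) \<and>
     (\<exists>bs. set bs \<subseteq> Ord \<and> B = span_over k bs)"

text \<open>O^1: elements of reduced norm one (reduced norm = determinant after rho).\<close>
definition norm_one :: "mat2 set \<Rightarrow> mat2 set" where
  "norm_one Ord = {g \<in> Ord. det g = 1}"

text \<open>O^1(t O_k) = {g in O^1. g - 1 in t Ord} (note (t O_k) Ord = t Ord).\<close>
definition norm_one_cong :: "mat2 set \<Rightarrow> complex \<Rightarrow> mat2 set" where
  "norm_one_cong Ord t = {g \<in> norm_one Ord. \<exists>x\<in>Ord. g - mat 1 = smult2 t x}"

text \<open>Gt is the preimage in SL(2,C) of a subgroup Gamma of PSL(2,C) (so it contains -I).\<close>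
definition sl2_preimage_group :: "mat2 set \<Rightarrow> bool" where
  "sl2_preimage_group Gt \<longleftrightarrow> mat 1 \<in> Gt \<and> - mat 1 \<in> Gt \<and>
     (\<forall>g\<in>Gt. det g = 1 \<and> matrix_inv g \<in> Gt) \<and> (\<forall>g\<in>Gt. \<forall>h\<in>Gt. g ** h \<in> Gt)"

text \<open>Gamma is an arithmetic Kleinian group derived from a quaternion algebra over k:
  Gamma is contained in rho(O^1)/{+-I} and has finite index there (finite covolume).\<close>
definition arith_derived :: "complex set \<Rightarrow> mat2 set \<Rightarrow> mat2 set \<Rightarrow> mat2 set \<Rightarrow> bool" where
  "arith_derived k B Ord Gt \<longleftrightarrow> quaternion_subalgebra k B \<and> is_order k B Ord \<and>
     sl2_preimage_group Gt \<and> Gt \<subseteq> norm_one Ord \<and>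
     (\<exists>F. finite F \<and> norm_one Ord = {f ** g | f g. f \<in> F \<and> g \<in> Gt})"

text \<open>Preimage in SL(2,C) of Gamma(t O_k), the image of Gt \<inter> rho(O^1(t O_k)).\<close>
definition cong_subgroup :: "mat2 set \<Rightarrow> mat2 set \<Rightarrow> complex \<Rightarrow> mat2 set" where
  "cong_subgroup Ord Gt t = {h \<in> Gt. h \<in> norm_one_cong Ord t \<or> - h \<in> norm_one_cong Ord t}"

text \<open>Normalized trace tr(gamma) = mu (a+d) = r e^{i theta}, r >= 0, theta in [0,pi).\<close>
definition ntr :: "mat2 \<Rightarrow> complex" where
  "ntr g = (if tr2 g = 0 then 0 else if 0 \<le> Arg (tr2 g) \<and> Arg (tr2 g) < pi then tr2 g else - tr2 g)"

definition loxodromic :: "mat2 \<Rightarrow> bool" where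
  "loxodromic g \<longleftrightarrow> tr2 g \<notin> {complex_of_real x | x. -2 \<le> x \<and> x \<le> 2}"

definition lam :: "mat2 \<Rightarrow> complex" where
  "lam g = (SOME z. z^2 - ntr g * z + 1 = 0 \<and> cmod z > 1)"

definition transl_len :: "mat2 \<Rightarrow> real" where
  "transl_len g = 2 * ln (cmod (lam g))"

definition hol :: "mat2 \<Rightarrow> real" where
  "hol g = 2 * Arg (lam g)"

end

theory Submission
  imports Defs Jordan_Normal_Form.Char_Poly
begin


inductive_set zspan :: "complex set \<Rightarrow> complex set" for S where
  zs0: "0 \<in> zspan S"
| zsb: "s \<in> S \<Longrightarrow> s \<in> zspan S"
| zsadd: "x \<in> zspan S \<Longrightarrow> y \<in> zspan S \<Longrightarrow> x + y \<in> zspan S"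
| zsneg: "x \<in> zspan S \<Longrightarrow> - x \<in> zspan S"

lemma zspan_rep:
  assumes "finite S" "x \<in> zspan S"
  shows "\<exists>f. (\<forall>s. f s \<in> \<int>) \<and> x = (\<Sum>s\<in>S. f s * s)"
  using assms(2)
proof induction
  case zs0
  then show ?case by (rule exI[of _ "\<lambda>_. 0"]) simp
next
  case (zsb s)
  show ?case
  proof (rule exI[of _ "\<lambda>t. if t = s then 1 else 0"], intro conjI)
    have "(\<Sum>t\<in>S. (if t = s then 1 else 0) * t) = (\<Sum>t\<in>S. if t = s then t else 0)"
      by (rule sum.cong) auto
    also have "\<dots> = s" using zsb assms(1) by (simp add: sum.delta')
    finally show "s = (\<Sum>t\<in>S. (if t = s then 1 else 0) * t)" by simp
  qed auto
next
  case (zsadd x y)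
  then obtain f g where "\<forall>s. f s \<in> \<int>" "x = (\<Sum>s\<in>S. f s * s)" "\<forall>s. g s \<in> \<int>" "y = (\<Sum>s\<in>S. g s * s)"
    by blast
  then show ?case
    by (intro exI[of _ "\<lambda>s. f s + g s"]) (auto simp: distrib_right sum.distrib)
next
  case (zsneg x)
  then obtain f where "\<forall>s. f s \<in> \<int>" "x = (\<Sum>s\<in>S. f s * s)" by blast
  then show ?case
    by (intro exI[of _ "\<lambda>s. - f s"]) (auto simp: sum_negf)
qed

lemma Ints_floor_Re: "(x::complex) \<in> \<int> \<Longrightarrow> of_int \<lfloor>Re x\<rfloor> = x"
  by (auto elim!: Ints_cases)

lemma DT:
  fixes W :: "complex set" and \<mu> :: complex
  assumes fin: "finite W" and nz: "\<exists>w\<in>W. w \<noteq> 0" and cl: "\<forall>w\<in>W. \<mu> * w \<in> zspan W"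
  shows "algebraic_int \<mu>"
proof -
  obtain ws where ws: "distinct ws" "set ws = W" using finite_distinct_list[OF fin] by blast
  define n where "n = length ws"
  have "\<forall>i. \<exists>f. i < n \<longrightarrow> (\<forall>s. f s \<in> \<int>) \<and> \<mu> * ws ! i = (\<Sum>s\<in>W. f s * s)"
  proof
    fix i
    show "\<exists>f. i < n \<longrightarrow> (\<forall>s. f s \<in> \<int>) \<and> \<mu> * ws ! i = (\<Sum>s\<in>W. f s * s)"
    proof (cases "i < n")
      case True
      then have "ws ! i \<in> W" using ws n_def by auto
      then show ?thesis using zspan_rep[OF fin] cl by blast
    qed auto
  qed
  then obtain F where F: "\<And>i s. i < n \<Longrightarrow> F i s \<in> \<int>"
     "\<And>i. i < n \<Longrightarrow> \<mu> * ws ! i = (\<Sum>s\<in>W. F i s * s)"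
    by metis
  have sumconv: "(\<Sum>s\<in>W. g s) = (\<Sum>j<n. g (ws ! j))" for g :: "complex \<Rightarrow> complex"
  proof -
    have "(\<Sum>s\<in>W. g s) = sum_list (map g ws)"
      using ws by (simp add: sum_list_distinct_conv_sum_set)
    also have "\<dots> = (\<Sum>j<n. g (ws ! j))"
      by (simp add: n_def sum_list_sum_nth atLeast0LessThan)
    finally show ?thesis .
  qed
  define Ai :: "int mat" where "Ai = Matrix.mat n n (\<lambda>(i,j). \<lfloor>Re (F i (ws ! j))\<rfloor>)"
  define A :: "complex mat" where "A = map_mat of_int Ai"
  define v :: "complex Matrix.vec" where "v = Matrix.vec n (\<lambda>i. ws ! i)"
  have Ai_c: "Ai \<in> carrier_mat n n" by (simp add: Ai_def)
  have A_c: "A \<in> carrier_mat n n" by (simp add: A_def Ai_def)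
  have Aent: "A $$ (i,j) = F i (ws ! j)" if "i < n" "j < n" for i j
    using that F(1) by (simp add: A_def Ai_def Ints_floor_Re)
  have "A *\<^sub>v v = \<mu> \<cdot>\<^sub>v v"
  proof (rule eq_vecI)
    fix i assume i: "i < dim_vec (\<mu> \<cdot>\<^sub>v v)"
    then have i': "i < n" by (simp add: v_def)
    have "(A *\<^sub>v v) $ i = (\<Sum>j<n. A $$ (i,j) * ws ! j)"
      using i' A_c by (simp add: mult_mat_vec_def scalar_prod_def v_def atLeast0LessThan row_def)
    also have "\<dots> = (\<Sum>j<n. F i (ws ! j) * ws ! j)"
      using i' Aent by simp
    also have "\<dots> = \<mu> * ws ! i" using F(2)[OF i'] sumconv by simp
    finally show "(A *\<^sub>v v) $ i = (\<mu> \<cdot>\<^sub>v v) $ i" using i' by (simp add: v_def)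
  qed (use A_c in \<open>simp add: v_def\<close>)
  moreover have "v \<noteq> 0\<^sub>v n"
  proof
    assume "v = 0\<^sub>v n"
    then have "\<forall>i<n. ws ! i = 0" by (metis index_vec index_zero_vec(1) v_def)
    then show False using nz ws n_def by (metis in_set_conv_nth)
  qed
  ultimately have "eigenvector A v \<mu>" using A_c by (simp add: eigenvector_def v_def)
  then have "eigenvalue A \<mu>" by (auto simp: eigenvalue_def)
  then have "poly (char_poly A) \<mu> = 0" using eigenvalue_root_char_poly[OF A_c] by simp
  moreover have "char_poly A = map_poly of_int (char_poly Ai)"
    unfolding A_def by (rule of_int_hom.char_poly_hom[OF Ai_c])
  moreover have "lead_coeff (char_poly Ai) = 1" using degree_monic_char_poly[OF Ai_c] by simp
  ultimately show ?thesis unfolding algebraic_int_altdef_ipoly by metis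
qed

lemma zspan_mono: assumes "S \<subseteq> T" "x \<in> zspan S" shows "x \<in> zspan T"
  using assms(2) by (induction rule: zspan.induct) (use assms(1) in \<open>auto intro: zspan.intros\<close>)

lemma zspan_diff: "x \<in> zspan S \<Longrightarrow> y \<in> zspan S \<Longrightarrow> x - y \<in> zspan S"
  using zsadd[OF _ zsneg] by (metis diff_conv_add_uminus)

lemma zspan_of_nat_mult: "x \<in> zspan S \<Longrightarrow> of_nat n * x \<in> zspan S"
  by (induction n) (auto simp: distrib_right intro: zspan.intros)

lemma zspan_Ints_mult: assumes "z \<in> \<int>" "x \<in> zspan S" shows "z * x \<in> zspan S"
proof -
  obtain m where m: "z = of_int m" using assms(1) by (auto elim: Ints_cases)
  show ?thesis
  proof (cases "m \<ge> 0")
    case True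
    then have "z = of_nat (nat m)" using m by simp
    then show ?thesis using zspan_of_nat_mult[OF assms(2)] by simp
  next
    case False
    then have "z = - of_nat (nat (-m))" using m by simp
    then show ?thesis using zsneg[OF zspan_of_nat_mult[OF assms(2)]] by simp
  qed
qed

lemma zspan_sum: "finite I \<Longrightarrow> (\<And>i. i \<in> I \<Longrightarrow> f i \<in> zspan S) \<Longrightarrow> sum f I \<in> zspan S"
  by (induction I rule: finite_induct) (auto intro: zspan.intros)

lemma zspan_mult_closed:
  assumes "\<And>s. s \<in> S \<Longrightarrow> c * s \<in> zspan T" "x \<in> zspan S"
  shows "c * x \<in> zspan T"
  using assms(2) by (induction rule: zspan.induct) (auto simp: distrib_left intro: zspan.intros assms(1))

definition stable :: "complex set \<Rightarrow> complex set \<Rightarrow> bool" where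
  "stable M C \<longleftrightarrow> finite M \<and> 1 \<in> M \<and> (\<forall>c\<in>C. \<forall>m\<in>M. c * m \<in> zspan M)"

lemma stable_zspan: "stable M C \<Longrightarrow> c \<in> C \<Longrightarrow> x \<in> zspan M \<Longrightarrow> c * x \<in> zspan M"
  unfolding stable_def by (auto intro: zspan_mult_closed)

lemma algebraic_intE_deg:
  assumes "algebraic_int (c::complex)"
  obtains p where "lead_coeff p = 1" "\<forall>i. coeff p i \<in> \<int>" "poly p c = 0" "degree p > 0"
proof -
  from assms obtain p where p: "lead_coeff p = 1" "\<forall>i. coeff p i \<in> \<int>" "poly p c = 0"
    by (auto elim: algebraic_int.cases)
  have "degree p > 0"
  proof (rule ccontr)
    assume "\<not> degree p > 0"
    then have "degree p = 0" by simp
    then have "p = [:1:]" using p(1) by (metis degree_eq_zeroE lead_coeff_pCons(2) pCons_0_0 zero_neq_one)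
    then show False using p(3) by simp
  qed
  with p that show ?thesis by blast
qed

lemma stable_insert:
  assumes "stable M C" "algebraic_int c"
  shows "\<exists>M'. stable M' (insert c C)"
proof -
  obtain p where p: "lead_coeff p = 1" "\<forall>i. coeff p i \<in> \<int>" "poly p c = 0" "degree p > 0"
    using algebraic_intE_deg[OF assms(2)] by blast
  define e where "e = degree p"
  define M' where "M' = (\<lambda>(a,m). c ^ a * m) ` ({..<e} \<times> M)"
  have finM: "finite M" "1 \<in> M" using assms(1) by (auto simp: stable_def)
  have fin: "finite M'" using finM by (simp add: M'_def)
  have one: "1 \<in> M'" unfolding M'_def using p(4) finM(2) e_def
    by (auto intro!: image_eqI[of _ _ "(0, 1)"])
  have inM': "c ^ a * m \<in> M'" if "a < e" "m \<in> M" for a m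
    using that unfolding M'_def by (auto intro!: image_eqI[of _ _ "(a, m)"])
  have powz: "c ^ a * x \<in> zspan M'" if "a < e" "x \<in> zspan M" for a x
    by (rule zspan_mult_closed[OF _ that(2)]) (auto intro: zsb inM' that(1))
  have ce: "c ^ e = - (\<Sum>i<e. coeff p i * c ^ i)"
  proof -
    have "0 = (\<Sum>i\<le>e. coeff p i * c ^ i)" using p(3) by (simp add: poly_altdef e_def)
    also have "\<dots> = (\<Sum>i<e. coeff p i * c ^ i) + c ^ e"
      using p(1) by (simp add: lessThan_Suc_atMost[symmetric] e_def)
    finally show ?thesis by (simp add: eq_neg_iff_add_eq_0 add.commute)
  qed
  have "\<forall>c'\<in>insert c C. \<forall>m'\<in>M'. c' * m' \<in> zspan M'"
  proof (intro ballI)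
    fix c' m' assume c': "c' \<in> insert c C" and m': "m' \<in> M'"
    then obtain a m where am: "a < e" "m \<in> M" "m' = c ^ a * m" unfolding M'_def by auto
    show "c' * m' \<in> zspan M'"
    proof (cases "c' \<in> C")
      case True
      have "c' * m \<in> zspan M" using assms(1) True am(2) by (auto simp: stable_def)
      then have "c ^ a * (c' * m) \<in> zspan M'" by (rule powz[OF am(1)])
      then show ?thesis using am(3) by (simp add: algebra_simps)
    next
      case False
      then have cc: "c' = c" using c' by simp
      show ?thesis
      proof (cases "a + 1 < e")
        case True
        then have "c ^ (a+1) * m \<in> M'" using inM' am by blast
        then show ?thesis using cc am(3) by (auto intro: zsb simp: algebra_simps)
      next
        case False
        then have ae: "a + 1 = e" using am(1) by simp
        have "c' * m' = c ^ e * m" using cc am(3) ae by (simp add: algebra_simps flip: ae)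
        also have "\<dots> = - (\<Sum>i<e. coeff p i * (c ^ i * m))"
          by (simp add: ce sum_distrib_right sum_distrib_left algebra_simps)
        also have "\<dots> \<in> zspan M'"
        proof (intro zsneg zspan_sum)
          fix i assume "i \<in> {..<e}"
          then have "c ^ i * m \<in> M'" using inM' am(2) by simp
          then show "coeff p i * (c ^ i * m) \<in> zspan M'"
            by (intro zspan_Ints_mult zsb) (auto intro: p(2)[rule_format])
        qed simp
        finally show ?thesis .
      qed
    qed
  qed
  then show ?thesis using fin one by (auto simp: stable_def)
qed

lemma stable_exists:
  assumes "finite C" "\<forall>c\<in>C. algebraic_int c"
  shows "\<exists>M. stable M C"
  using assms
proof (induction C rule: finite_induct)
  case empty
  show ?case by (rule exI[of _ "{1}"]) (simp add: stable_def)
next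
  case (insert c C)
  then obtain M where "stable M C" by auto
  then show ?case using stable_insert insert.prems by auto
qed

lemma algebraic_int_add:
  assumes "algebraic_int (x::complex)" "algebraic_int y"
  shows "algebraic_int (x + y)"
proof -
  obtain M where M: "stable M {x, y}" using stable_exists[of "{x,y}"] assms by auto
  show ?thesis
  proof (rule DT[of M])
    show "finite M" "\<exists>w\<in>M. w \<noteq> 0" using M by (auto simp: stable_def)
    show "\<forall>w\<in>M. (x + y) * w \<in> zspan M"
      using M by (auto simp: stable_def distrib_right intro: zsadd)
  qed
qed

lemma algebraic_int_mult:
  assumes "algebraic_int (x::complex)" "algebraic_int y"
  shows "algebraic_int (x * y)"
proof -
  obtain M where M: "stable M {x, y}" using stable_exists[of "{x,y}"] assms by auto
  show ?thesis
  proof (rule DT[of M])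
    show "finite M" "\<exists>w\<in>M. w \<noteq> 0" using M by (auto simp: stable_def)
    show "\<forall>w\<in>M. (x * y) * w \<in> zspan M"
    proof
      fix w assume "w \<in> M"
      then have "y * w \<in> zspan M" using M by (auto simp: stable_def)
      then have "x * (y * w) \<in> zspan M" using stable_zspan[OF M] by auto
      then show "(x * y) * w \<in> zspan M" by (simp add: mult.assoc)
    qed
  qed
qed

hide_const (open) Matrix.mat Determinant.det Matrix.vec Matrix.row Matrix.col Matrix.transpose_mat

lemma zspan_mult_right: "z \<in> zspan S \<Longrightarrow> z * w \<in> zspan ((\<lambda>s. s * w) ` S)"
  by (induction rule: zspan.induct) (auto simp: distrib_right intro: zspan.intros)

lemma lc_apply:
  "(lin_comb cs gs *v v) $ p = (\<Sum>l<length gs. cs ! l * ((gs ! l *v v) $ p))"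
  unfolding lin_comb_def smult2_def matrix_vector_mult_def
  by (simp add: sum_component sum_distrib_left sum_distrib_right mult.assoc sum.swap[of _ UNIV])

lemma mv_smult: "(A::mat2) *v (c *s v) = c *s (A *v v)"
  by (simp add: vec_eq_iff matrix_vector_mult_def vector_scalar_mult_def sum_distrib_left algebra_simps)

lemma smult2_0[simp]: "smult2 0 A = 0"
  by (simp add: smult2_def Finite_Cartesian_Product.vec_eq_iff)

lemma smult2_1[simp]: "smult2 1 A = A"
  by (simp add: smult2_def Finite_Cartesian_Product.vec_eq_iff)

lemma lin_comb_unit:
  assumes "j < length gs"
  shows "lin_comb (map (\<lambda>l. if l = j then 1 else 0) [0..<length gs]) gs = gs ! j"
proof -
  have "lin_comb (map (\<lambda>l. if l = j then 1 else 0) [0..<length gs]) gs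
      = (\<Sum>l<length gs. if l = j then gs ! l else 0)"
    unfolding lin_comb_def by (intro sum.cong) auto
  also have "\<dots> = gs ! j" using assms by (simp add: sum.delta)
  finally show ?thesis .
qed

lemma order_eig_algint:
  assumes ord: "is_order k B Ord" and k01: "0 \<in> k" "1 \<in> k"
    and x: "x \<in> Ord" and ev: "x *v v = \<mu> *s v" and vnz: "v \<noteq> 0"
  shows "algebraic_int \<mu>"
proof -
  let ?Ok = "ring_of_integers k"
  have Ok01: "0 \<in> ?Ok" "1 \<in> ?Ok" using k01 by (auto simp: ring_of_integers_def)
  have Okai: "\<And>c. c \<in> ?Ok \<Longrightarrow> algebraic_int c" by (auto simp: ring_of_integers_def)
  obtain gs where gs: "Ord = span_over ?Ok gs" using ord by (auto simp: is_order_def)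
  define n where "n = length gs"
  have closed: "\<And>a b. a \<in> Ord \<Longrightarrow> b \<in> Ord \<Longrightarrow> a ** b \<in> Ord"
    and one: "mat 1 \<in> Ord" using ord by (auto simp: is_order_def)
  have gsin: "gs ! j \<in> Ord" if "j < n" for j
  proof -
    have "lin_comb (map (\<lambda>l. if l = j then 1 else 0) [0..<length gs]) gs \<in> Ord"
      unfolding gs span_over_def using Ok01 by (auto intro!: exI)
    then show ?thesis using lin_comb_unit that n_def by simp
  qed
  have "\<forall>j. \<exists>cs. j < n \<longrightarrow> length cs = n \<and> set cs \<subseteq> ?Ok \<and> gs ! j ** x = lin_comb cs gs"
  proof
    fix j show "\<exists>cs. j < n \<longrightarrow> length cs = n \<and> set cs \<subseteq> ?Ok \<and> gs ! j ** x = lin_comb cs gs"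
    proof (cases "j < n")
      case True
      then have "gs ! j ** x \<in> Ord" using closed gsin x by blast
      then show ?thesis unfolding gs span_over_def n_def by auto
    qed auto
  qed
  then obtain CS where CS: "\<And>j. j < n \<Longrightarrow> length (CS j) = n \<and> set (CS j) \<subseteq> ?Ok \<and> gs ! j ** x = lin_comb (CS j) gs"
    by metis
  obtain es where es: "length es = n" "set es \<subseteq> ?Ok" "mat 1 = lin_comb es gs"
    using one unfolding gs span_over_def n_def by auto
  obtain p where p: "v $ p \<noteq> 0" using vnz by (metis Finite_Cartesian_Product.vec_eq_iff Finite_Cartesian_Product.zero_index)
  define w where "w l = (gs ! l *v v) $ p" for l
  have "v $ p = (mat 1 *v v) $ p" by simp
  also have "\<dots> = (\<Sum>l<n. es ! l * w l)" unfolding es(3) lc_apply w_def n_def ..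
  finally obtain l0 where l0: "l0 < n" "w l0 \<noteq> 0" using p
    by (metis (no_types, lifting) mult_zero_right sum.neutral lessThan_iff)
  have eqj: "\<mu> * w j = (\<Sum>l<n. CS j ! l * w l)" if "j < n" for j
  proof -
    have "\<mu> * w j = ((gs ! j ** x) *v v) $ p"
      by (simp add: w_def ev mv_smult flip: matrix_vector_mul_assoc)
    also have "\<dots> = (\<Sum>l<n. CS j ! l * w l)"
      using CS[OF that] by (simp add: lc_apply w_def n_def)
    finally show ?thesis .
  qed
  define C where "C = (\<lambda>(j,l). CS j ! l) ` ({..<n} \<times> {..<n})"
  have Cai: "\<forall>c\<in>C. algebraic_int c"
  proof
    fix c assume "c \<in> C"
    then obtain j l where "j < n" "l < n" "c = CS j ! l" unfolding C_def by auto
    then have "c \<in> ?Ok" using CS[of j] by (metis nth_mem subsetD)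
    then show "algebraic_int c" by (rule Okai)
  qed
  obtain M where M: "stable M C" using stable_exists[of C] Cai by (auto simp: C_def)
  define W where "W = (\<lambda>(m,l). m * w l) ` (M \<times> {..<n})"
  show ?thesis
  proof (rule DT[of W])
    show "finite W" using M by (auto simp: W_def stable_def)
    have "(\<lambda>(m,l). m * w l) (1, l0) \<in> W" unfolding W_def
      using M l0 by (intro imageI) (auto simp: stable_def)
    then show "\<exists>u\<in>W. u \<noteq> 0" using l0 by auto
    show "\<forall>u\<in>W. \<mu> * u \<in> zspan W"
    proof
      fix u assume "u \<in> W"
      then obtain m j where mj: "m \<in> M" "j < n" "u = m * w j" by (auto simp: W_def)
      have "\<mu> * u = (\<Sum>l<n. (CS j ! l * m) * w l)"
      proof -
        have "\<mu> * u = m * (\<mu> * w j)" using mj(3) by (simp add: algebra_simps)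
        also have "\<dots> = m * (\<Sum>l<n. CS j ! l * w l)" using eqj[OF mj(2)] by simp
        also have "\<dots> = (\<Sum>l<n. (CS j ! l * m) * w l)"
          by (simp add: sum_distrib_left mult.commute mult.left_commute)
        finally show ?thesis .
      qed
      also have "\<dots> \<in> zspan W"
      proof (rule zspan_sum)
        fix l assume l: "l \<in> {..<n}"
        have "CS j ! l \<in> C" using mj(2) l by (auto simp: C_def)
        then have "CS j ! l * m \<in> zspan M" using M mj(1) by (auto simp: stable_def)
        then have "(CS j ! l * m) * w l \<in> zspan ((\<lambda>s. s * w l) ` M)" by (rule zspan_mult_right)
        moreover have "(\<lambda>s. s * w l) ` M \<subseteq> W" using l by (auto simp: W_def)
        ultimately show "(CS j ! l * m) * w l \<in> zspan W" by (rule zspan_mono[rotated])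
      qed simp
      finally show "\<mu> * u \<in> zspan W" .
    qed
  qed
qed

lemma mv2: "((x::mat2) *v v) $ i = x $ i $ 1 * v $ 1 + x $ i $ 2 * v $ 2"
  by (simp add: matrix_vector_mult_def sum_2)

lemma eig_vec:
  fixes x :: mat2
  assumes "\<mu>^2 - tr2 x * \<mu> + det x = 0"
  shows "\<exists>v::complex^2. v \<noteq> 0 \<and> x *v v = \<mu> *s v"
proof -
  define a b c e where "a = x$1$1" "b = x$1$2" "c = x$2$1" "e = x$2$2"
  have h: "(a - \<mu>) * (e - \<mu>) = b * c"
    using assms unfolding a_b_c_e_def tr2_def det_2 by (simp add: power2_eq_square algebra_simps)
  have ev: "x *v v = \<mu> *s v \<longleftrightarrow> a * v$1 + b * v$2 = \<mu> * v$1 \<and> c * v$1 + e * v$2 = \<mu> * v$2" for v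
    unfolding Finite_Cartesian_Product.vec_eq_iff forall_2 mv2 a_b_c_e_def by simp
  have nz: "v$1 \<noteq> 0 \<or> v$2 \<noteq> 0 \<Longrightarrow> v \<noteq> 0" for v :: "complex^2" by auto
  show ?thesis
  proof (cases "b \<noteq> 0 \<or> \<mu> \<noteq> a")
    case True
    let ?v = "vector [b, \<mu> - a] :: complex^2"
    have "x *v ?v = \<mu> *s ?v" unfolding ev using h
      by (simp add: algebra_simps)
    moreover have "?v \<noteq> 0" using True by (intro nz) simp
    ultimately show ?thesis by blast
  next
    case False
    then have b0: "b = 0" and ma: "\<mu> = a" by auto
    show ?thesis
    proof (cases "\<mu> \<noteq> e \<or> c \<noteq> 0")
      case True
      let ?v = "vector [\<mu> - e, c] :: complex^2"
      have "x *v ?v = \<mu> *s ?v" unfolding ev using b0 ma by (simp add: algebra_simps)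
      moreover have "?v \<noteq> 0" using True by (intro nz) simp
      ultimately show ?thesis by blast
    next
      case False
      let ?v = "vector [1, 0] :: complex^2"
      have "x *v ?v = \<mu> *s ?v" unfolding ev using b0 ma False by simp
      moreover have "?v \<noteq> 0" by (intro nz) simp
      ultimately show ?thesis by blast
    qed
  qed
qed

lemma order_det_algint:
  assumes ord: "is_order k B Ord" and k01: "0 \<in> k" "1 \<in> k" and x: "x \<in> Ord"
  shows "algebraic_int (det x)"
proof -
  define \<tau> \<delta> where "\<tau> = tr2 x" "\<delta> = det x"
  define s where "s = csqrt (\<tau>^2 - 4 * \<delta>)"
  have s2: "s^2 = \<tau>^2 - 4 * \<delta>" by (simp add: s_def)
  define m1 m2 where "m1 = (\<tau> + s) / 2" "m2 = (\<tau> - s) / 2"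
  have prod: "m1 * m2 = \<delta>" unfolding m1_m2_def using s2
    by (simp add: field_simps power2_eq_square)
  have e1: "m1^2 - \<tau> * m1 + \<delta> = (s^2 - (\<tau>^2 - 4 * \<delta>)) / 4" unfolding m1_m2_def
    by (simp add: field_simps power2_eq_square)
  have e2: "m2^2 - \<tau> * m2 + \<delta> = (s^2 - (\<tau>^2 - 4 * \<delta>)) / 4" unfolding m1_m2_def
    by (simp add: field_simps power2_eq_square)
  have r1: "m1^2 - tr2 x * m1 + det x = 0" using e1 s2 \<tau>_\<delta>_def by simp
  have r2: "m2^2 - tr2 x * m2 + det x = 0" using e2 s2 \<tau>_\<delta>_def by simp
  have a1: "algebraic_int m1"
    using eig_vec[OF r1] order_eig_algint[OF ord k01 x] by blast
  have a2: "algebraic_int m2"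
    using eig_vec[OF r2] order_eig_algint[OF ord k01 x] by blast
  show ?thesis using algebraic_int_mult[OF a1 a2] prod \<tau>_\<delta>_def by simp
qed




lemma of_rat_complex: "(of_rat r :: complex) = complex_of_real (of_rat r)"
proof -
  obtain a b where "r = Rat.Fract a b" "b \<noteq> 0" by (cases r) auto
  then show ?thesis by (simp add: of_rat_rat)
qed

lemma Re_of_rat_c[simp]: "Re (of_rat r) = of_rat r"
  by (subst of_rat_complex) (rule Re_complex_of_real)

lemma Im_of_rat_c[simp]: "Im (of_rat r) = 0"
  by (subst of_rat_complex) (rule Im_complex_of_real)

lemma k_mem: "x \<in> imag_quad_field d \<longleftrightarrow> (\<exists>a\<in>\<rat>. \<exists>b\<in>\<rat>. x = Complex a (b * sqrt (real d)))"
proof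
  assume "x \<in> imag_quad_field d"
  then have "\<exists>a b. x = of_rat a + of_rat b * \<i> * complex_of_real (sqrt (real d))"
    unfolding imag_quad_field_def by (simp only: mem_Collect_eq simp_thms)
  then obtain a b where "x = of_rat a + of_rat b * \<i> * complex_of_real (sqrt (real d))"
    by blast
  then have "x = Complex (of_rat a) (of_rat b * sqrt (real d))"
    by (simp add: complex_eq_iff)
  moreover have "(of_rat a :: real) \<in> \<rat>" "(of_rat b :: real) \<in> \<rat>" by simp_all
  ultimately show "\<exists>a\<in>\<rat>. \<exists>b\<in>\<rat>. x = Complex a (b * sqrt (real d))" by blast
next
  assume "\<exists>a\<in>\<rat>. \<exists>b\<in>\<rat>. x = Complex a (b * sqrt (real d))"
  then obtain a b where ab: "a \<in> \<rat>" "b \<in> \<rat>" "x = Complex a (b * sqrt (real d))" by blast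
  obtain a' where a': "a = of_rat a'" using ab(1) by (blast elim: Rats_cases)
  obtain b' where b': "b = of_rat b'" using ab(2) by (blast elim: Rats_cases)
  have "x = of_rat a' + of_rat b' * \<i> * complex_of_real (sqrt (real d))"
    using ab(3) a' b' by (simp add: complex_eq_iff)
  then have "\<exists>a b. x = of_rat a + of_rat b * \<i> * complex_of_real (sqrt (real d))" by blast
  then show "x \<in> imag_quad_field d"
    unfolding imag_quad_field_def by (simp only: mem_Collect_eq simp_thms)
qed

lemma k_memI: "a \<in> \<rat> \<Longrightarrow> b \<in> \<rat> \<Longrightarrow> x = Complex a (b * sqrt (real d)) \<Longrightarrow> x \<in> imag_quad_field d"
  using k_mem by blast

lemma k_memE:
  assumes "x \<in> imag_quad_field d"
  obtains a b where "a \<in> \<rat>" "b \<in> \<rat>" "x = Complex a (b * sqrt (real d))"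
  using assms k_mem by blast

lemma k_add: assumes "x \<in> imag_quad_field d" "y \<in> imag_quad_field d" shows "x + y \<in> imag_quad_field d"
proof -
  obtain a b where h: "a \<in> \<rat>" "b \<in> \<rat>" "x = Complex a (b * sqrt (real d))" using assms(1) by (rule k_memE)
  obtain a' b' where h': "a' \<in> \<rat>" "b' \<in> \<rat>" "y = Complex a' (b' * sqrt (real d))" using assms(2) by (rule k_memE)
  show ?thesis
    by (rule k_memI[of "a + a'" "b + b'"]) (use h h' in \<open>simp_all add: complex_eq_iff algebra_simps\<close>)
qed

lemma k_neg: assumes "x \<in> imag_quad_field d" shows "- x \<in> imag_quad_field d"
proof -
  obtain a b where h: "a \<in> \<rat>" "b \<in> \<rat>" "x = Complex a (b * sqrt (real d))" using assms(1) by (rule k_memE)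
  show ?thesis
    by (rule k_memI[of "- a" "- b"]) (use h in \<open>simp_all add: complex_eq_iff\<close>)
qed

lemma k_diff: "x \<in> imag_quad_field d \<Longrightarrow> y \<in> imag_quad_field d \<Longrightarrow> x - y \<in> imag_quad_field d"
  using k_add[OF _ k_neg] by (metis diff_conv_add_uminus)

lemma k_mult: assumes "x \<in> imag_quad_field d" "y \<in> imag_quad_field d" shows "x * y \<in> imag_quad_field d"
proof -
  obtain a b where h: "a \<in> \<rat>" "b \<in> \<rat>" "x = Complex a (b * sqrt (real d))" using assms(1) by (rule k_memE)
  obtain a' b' where h': "a' \<in> \<rat>" "b' \<in> \<rat>" "y = Complex a' (b' * sqrt (real d))" using assms(2) by (rule k_memE)
  have ss: "sqrt (real d) * sqrt (real d) = real d" by simp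
  have "x * y = Complex (a * a' - b * b' * real d) ((a * b' + b * a') * sqrt (real d))"
    using h(3) h'(3) by (simp add: complex_eq_iff algebra_simps)
  then show ?thesis
    by (rule k_memI[rotated 2]) (use h h' in simp_all)
qed

lemma k_inverse: assumes "x \<in> imag_quad_field d" shows "inverse x \<in> imag_quad_field d"
proof -
  obtain a b where h: "a \<in> \<rat>" "b \<in> \<rat>" "x = Complex a (b * sqrt (real d))" using assms(1) by (rule k_memE)
  define N where "N = a^2 + b^2 * real d"
  have "inverse x = Complex (a / N) ((- b / N) * sqrt (real d))"
    using h(3) by (simp add: complex_eq_iff N_def power_mult_distrib)
  moreover have "N \<in> \<rat>" using h by (simp add: N_def)
  ultimately show ?thesis
    by (intro k_memI[of "a / N" "- b / N"]) (use h in simp_all)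
qed

lemma k_divide: "x \<in> imag_quad_field d \<Longrightarrow> y \<in> imag_quad_field d \<Longrightarrow> x / y \<in> imag_quad_field d"
  by (simp add: divide_inverse k_mult k_inverse)

lemma k_0: "0 \<in> imag_quad_field d"
  by (rule k_memI[of 0 0]) (simp_all add: complex_eq_iff)

lemma k_1: "1 \<in> imag_quad_field d"
  by (rule k_memI[of 1 0]) (simp_all add: complex_eq_iff)

lemma k_cnj: assumes "x \<in> imag_quad_field d" shows "cnj x \<in> imag_quad_field d"
proof -
  obtain a b where h: "a \<in> \<rat>" "b \<in> \<rat>" "x = Complex a (b * sqrt (real d))" using assms(1) by (rule k_memE)
  show ?thesis
    by (rule k_memI[of "a" "- b"]) (use h in \<open>simp_all add: complex_eq_iff\<close>)
qed

lemma k_Re_rat: assumes "x \<in> imag_quad_field d" shows "Re x \<in> \<rat>"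
proof -
  obtain a b where h: "a \<in> \<rat>" "b \<in> \<rat>" "x = Complex a (b * sqrt (real d))" using assms(1) by (rule k_memE)
  then show ?thesis by simp
qed

lemma k_norm_rat: assumes "x \<in> imag_quad_field d" shows "(cmod x)^2 \<in> \<rat>"
proof -
  obtain a b where h: "a \<in> \<rat>" "b \<in> \<rat>" "x = Complex a (b * sqrt (real d))" using assms(1) by (rule k_memE)
  have "(cmod x)^2 = a^2 + b^2 * real d" using h(3) by (simp add: cmod_power2 power_mult_distrib)
  then show ?thesis using h by simp
qed



lemma CH2: "(y::mat2) ** y = smult2 (tr2 y) y - smult2 (det y) (mat 1)"
  by (simp add: Finite_Cartesian_Product.vec_eq_iff forall_2 matrix_matrix_mult_def sum_2 det_2 tr2_def
      smult2_def Finite_Cartesian_Product.mat_def algebra_simps)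

lemma det_smult_one: "det (smult2 c (mat 1)) = c^2"
  by (simp add: det_2 smult2_def Finite_Cartesian_Product.mat_def power2_eq_square)

lemma mat1_nz: "(mat 1 :: mat2) \<noteq> 0"
proof
  assume "(mat 1 :: mat2) = 0"
  then have "(mat 1 :: mat2) $ 1 $ 1 = 0" by simp
  then show False by (simp add: Finite_Cartesian_Product.mat_def)
qed

lemma quat_det_in_k:
  assumes Q: "quaternion_subalgebra (imag_quad_field d) B" and y: "y \<in> B"
  shows "det y \<in> imag_quad_field d"
proof -
  let ?k = "imag_quad_field d"
  obtain bs where bs: "length bs = 4" "B = span_over ?k bs"
    and ind: "\<And>cs. length cs = 4 \<Longrightarrow> lin_comb cs bs = 0 \<Longrightarrow> \<forall>c\<in>set cs. c = 0"
    and one: "mat 1 \<in> B" and cl: "\<And>a b. a \<in> B \<Longrightarrow> b \<in> B \<Longrightarrow> a ** b \<in> B"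
    using Q unfolding quaternion_subalgebra_def by blast
  define LC where "LC c = (\<Sum>i<4. smult2 (c i) (bs ! i))" for c
  have coords: "\<exists>c. (\<forall>i<4. c i \<in> ?k) \<and> z = LC c" if "z \<in> B" for z
  proof -
    have "z \<in> span_over ?k bs" using that bs(2) by simp
    then obtain cs where cs: "length cs = 4" "set cs \<subseteq> ?k" "z = lin_comb cs bs"
      using bs(1) unfolding span_over_def by auto
    show ?thesis
      by (rule exI[of _ "\<lambda>i. cs ! i"]) (use cs bs(1) in \<open>auto simp: LC_def lin_comb_def\<close>)
  qed
  have indep: "\<forall>i<4. c i = 0" if "LC c = 0" for c
  proof -
    have "lin_comb (map c [0..<4]) bs = LC c"
      unfolding lin_comb_def LC_def bs(1) by (intro sum.cong) auto
    then have "\<forall>x\<in>set (map c [0..<4]). x = 0" using ind[of "map c [0..<4]"] that by simp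
    then show ?thesis by auto
  qed
  have LClin: "LC (\<lambda>i. p i - T * q i + D * r i) = LC p - smult2 T (LC q) + smult2 D (LC r)" for p q r T D
    unfolding LC_def smult2_def
    by (simp add: Finite_Cartesian_Product.vec_eq_iff sum_component sum.distrib sum_subtractf
        sum_distrib_left algebra_simps)
  have LCsm: "LC (\<lambda>i. T * q i) = smult2 T (LC q)" for q T
    unfolding LC_def smult2_def
    by (simp add: Finite_Cartesian_Product.vec_eq_iff sum_component sum_distrib_left algebra_simps)
  obtain \<alpha> where \<alpha>: "\<forall>i<4. \<alpha> i \<in> ?k" "mat 1 = LC \<alpha>" using coords[OF one] by blast
  obtain \<beta> where \<beta>: "\<forall>i<4. \<beta> i \<in> ?k" "y = LC \<beta>" using coords[OF y] by blast
  obtain \<gamma> where \<gamma>: "\<forall>i<4. \<gamma> i \<in> ?k" "y ** y = LC \<gamma>" using coords[OF cl[OF y y]] by blast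
  define T D where "T = tr2 y" "D = det y"
  have "LC (\<lambda>i. \<gamma> i - T * \<beta> i + D * \<alpha> i) = 0"
    unfolding LClin using \<alpha>(2) \<beta>(2) \<gamma>(2) CH2[of y] T_D_def by simp
  then have rel: "\<And>i. i < 4 \<Longrightarrow> \<gamma> i = T * \<beta> i - D * \<alpha> i"
    using indep by (metis add_diff_eq diff_add_eq eq_iff_diff_eq_0 diff_diff_eq2)
  show ?thesis
  proof (cases "\<exists>i<4. \<exists>j<4. \<alpha> i * \<beta> j - \<alpha> j * \<beta> i \<noteq> 0")
    case True
    then obtain i j where ij: "i < 4" "j < 4" "\<alpha> i * \<beta> j - \<alpha> j * \<beta> i \<noteq> 0" by blast
    have "\<gamma> i * \<beta> j - \<gamma> j * \<beta> i = - D * (\<alpha> i * \<beta> j - \<alpha> j * \<beta> i)"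
      unfolding rel[OF ij(1)] rel[OF ij(2)] by (simp add: algebra_simps)
    then have "D = - (\<gamma> i * \<beta> j - \<gamma> j * \<beta> i) / (\<alpha> i * \<beta> j - \<alpha> j * \<beta> i)"
      using ij(3) by (simp add: field_simps)
    moreover have "\<gamma> i * \<beta> j - \<gamma> j * \<beta> i \<in> ?k" "\<alpha> i * \<beta> j - \<alpha> j * \<beta> i \<in> ?k"
      using ij \<alpha>(1) \<beta>(1) \<gamma>(1) by (auto intro!: k_diff k_mult)
    ultimately show ?thesis using T_D_def k_neg k_divide by metis
  next
    case False
    have "\<exists>i<4. \<alpha> i \<noteq> 0"
    proof (rule ccontr)
      assume "\<not> (\<exists>i<4. \<alpha> i \<noteq> 0)"
      then have "LC \<alpha> = 0" unfolding LC_def by (intro sum.neutral) auto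
      then show False using \<alpha>(2) mat1_nz by simp
    qed
    then obtain i where i: "i < 4" "\<alpha> i \<noteq> 0" by blast
    define c where "c = \<beta> i / \<alpha> i"
    have ck: "c \<in> ?k" unfolding c_def using i \<alpha>(1) \<beta>(1) by (auto intro: k_divide)
    have "\<beta> j = c * \<alpha> j" if "j < 4" for j
    proof -
      have "\<alpha> i * \<beta> j - \<alpha> j * \<beta> i = 0" using False i(1) that by blast
      then show ?thesis using i(2) unfolding c_def by (simp add: field_simps)
    qed
    then have "LC \<beta> = LC (\<lambda>j. c * \<alpha> j)" unfolding LC_def by (intro sum.cong) auto
    then have "y = smult2 c (mat 1)" using \<beta>(2) \<alpha>(2) LCsm by simp
    then have "det y = c * c" using det_smult_one by (simp add: power2_eq_square)
    then show ?thesis using ck k_mult by simp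
  qed
qed




lemma ineq_unit:
  fixes R a b p q :: real
  assumes R: "R > 100" and ab: "a^2 + b^2 = R^2" and b0: "0 \<le> b" and ba: "4*b \<le> a"
    and p: "p \<ge> 1" and q: "\<bar>q\<bar> \<le> 2"
  shows "(R + 1/R)^2 \<le> (a*(1+1/R^2) + p)^2 + (b*(1-1/R^2) + q)^2"
proof -
  have a0: "a \<ge> 0" using b0 ba by linarith
  have bla: "b \<le> a" using b0 ba by linarith
  have "b^2 \<le> a^2" using b0 bla by (simp add: power_mono)
  then have "R^2 \<le> 2 * a^2" using ab by linarith
  moreover have "R^2 > 100^2" using R by (intro power_strict_mono) auto
  ultimately have "a^2 > 4^2" by simp
  then have a4: "a \<ge> 4" using a0 by (meson abs_le_square_iff less_eq_real_def not_le power2_less_imp_less zero_le_numeral)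
  define e where "e = 1 / R^2"
  have e0: "e \<ge> 0" "e \<le> 1" using R by (auto simp: e_def)
  have eR: "e * R^2 = 1" using R by (simp add: e_def)
  define A B where "A = a * (1 + e)" "B = b * (1 - e)"
  have h1: "(A + p)^2 + (B + q)^2 \<ge> A^2 + B^2 + 2*A*p + 2*B*q"
    by (simp add: power2_eq_square algebra_simps)
  have h2: "A^2 + B^2 = R^2 + e + 2 - 4 * e * b^2"
  proof -
    have "A^2 + B^2 = (a^2 + b^2) * (1 + e^2) + 2 * e * (a^2 - b^2)"
      by (simp add: A_B_def power2_eq_square algebra_simps)
    also have "\<dots> = R^2 * (1 + e^2) + 2 * e * (R^2 - 2 * b^2)" unfolding ab[symmetric] by (simp add: algebra_simps)
    also have "\<dots> = R^2 + e * (e * R^2) + 2 * (e * R^2) - 4 * e * b^2"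
      by (simp add: algebra_simps power2_eq_square)
    also have "\<dots> = R^2 + e + 2 - 4 * e * b^2" using eR by simp
    finally show ?thesis .
  qed
  have h3: "A * p \<ge> a"
  proof -
    have "A \<ge> a" using a0 e0 by (simp add: A_B_def algebra_simps)
    moreover have "A * 1 \<le> A * p" by (rule mult_left_mono[OF p]) (use a0 e0 in \<open>simp add: A_B_def\<close>)
    ultimately show ?thesis by linarith
  qed
  have h4: "B * q \<ge> - 2 * b"
  proof -
    have be: "b * e \<ge> 0" "b * e \<le> b" using b0 e0 mult_left_le[OF e0(2) b0] by simp_all
    have B0: "B \<ge> 0" "B \<le> b" using b0 e0 be by (auto simp: A_B_def algebra_simps)
    have "B * q \<ge> - (B * 2)"
      using B0 q by (metis abs_le_iff abs_mult abs_of_nonneg minus_le_iff mult_left_mono)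
    then show ?thesis using B0 by linarith
  qed
  have h5: "e * b^2 \<le> 1"
  proof -
    have "0 \<le> a^2" by simp
    then have "b^2 \<le> R^2" using ab by linarith
    then have "e * b^2 \<le> e * R^2" using e0 by (simp add: mult_left_mono)
    then show ?thesis using eR by simp
  qed
  have lhs: "(R + 1/R)^2 = R^2 + 2 + e"
    using R by (simp add: e_def power2_eq_square field_simps)
  show ?thesis
    unfolding lhs A_B_def[symmetric] e_def[symmetric]
    using h1 h2 h3 h4 h5 a4 ba by linarith
qed

lemma ineq_big:
  fixes R :: real and n t :: complex
  assumes R: "R > 100" and n2: "(cmod n)^2 \<ge> 2" and t: "cmod (t^2) \<ge> R - 3"
  shows "cmod (2 - t^2 * n) \<ge> R + 1/R"
proof -
  have "cmod n \<ge> 1.4"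
  proof (rule ccontr)
    assume "\<not> cmod n \<ge> 1.4"
    then have "cmod n < 1.4" by simp
    then have "(cmod n)^2 < 1.4^2" by (intro power_strict_mono) auto
    then show False using n2 by (simp add: power2_eq_square)
  qed
  then have "(R - 3) * 1.4 \<le> cmod (t^2) * cmod n"
    by (intro mult_mono) (use t R in auto)
  then have "cmod (t^2 * n) \<ge> (R - 3) * 1.4" by (simp add: norm_mult)
  moreover have "cmod (2 - t^2 * n) \<ge> cmod (t^2 * n) - 2"
    using norm_triangle_ineq3[of "t^2 * n" 2] by (simp add: norm_minus_commute)
  moreover have "1/R \<le> 1" using R by simp
  moreover have "(R - 3) * 1.4 = 1.4 * R - 4.2" by (simp add: field_simps)
  ultimately show ?thesis using R by linarith
qed




lemma ntr_cases: "ntr g = tr2 g \<or> ntr g = - tr2 g"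
  by (auto simp: ntr_def)

lemma cmod_ntr: "cmod (ntr g) = cmod (tr2 g)"
  using ntr_cases[of g] by auto

lemma lox_def2: "loxodromic g \<longleftrightarrow> (\<forall>x. -2 \<le> x \<and> x \<le> 2 \<longrightarrow> tr2 g \<noteq> complex_of_real x)"
  unfolding loxodromic_def by blast

lemma lox_ntr:
  assumes "loxodromic g"
  shows "\<forall>x. -2 \<le> x \<and> x \<le> 2 \<longrightarrow> ntr g \<noteq> complex_of_real x"
proof (intro allI impI)
  fix x :: real assume x: "-2 \<le> x \<and> x \<le> 2"
  show "ntr g \<noteq> complex_of_real x"
  proof
    assume e: "ntr g = complex_of_real x"
    from ntr_cases[of g] show False
    proof
      assume "ntr g = tr2 g" then show False using e x assms lox_def2 by metis
    next
      assume "ntr g = - tr2 g"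
      then have "tr2 g = complex_of_real (- x)" using e by simp
      then show False using x assms lox_def2 by (metis minus_le_iff neg_le_iff_le)
    qed
  qed
qed

lemma quad_root_exists:
  assumes nr: "\<forall>x. -2 \<le> x \<and> x \<le> 2 \<longrightarrow> \<tau> \<noteq> complex_of_real x"
  shows "\<exists>z. z^2 - \<tau> * z + 1 = 0 \<and> cmod z > 1"
proof -
  define s where "s = csqrt (\<tau>^2 - 4)"
  have s2: "s^2 = \<tau>^2 - 4" by (simp add: s_def)
  define z0 z1 where "z0 = (\<tau> + s) / 2" "z1 = (\<tau> - s) / 2"
  have prod: "z0 * z1 = 1" unfolding z0_z1_def using s2
    by (simp add: field_simps power2_eq_square)
  have sum: "z0 + z1 = \<tau>" unfolding z0_z1_def by (simp add: field_simps)
  have root0: "z0^2 - \<tau> * z0 + 1 = 0"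
  proof -
    have "z0^2 - \<tau> * z0 + 1 = z0^2 - (z0 + z1) * z0 + z0 * z1" using sum prod by simp
    also have "\<dots> = 0" by (simp add: algebra_simps power2_eq_square)
    finally show ?thesis .
  qed
  have root1: "z1^2 - \<tau> * z1 + 1 = 0"
  proof -
    have "z1^2 - \<tau> * z1 + 1 = z1^2 - (z0 + z1) * z1 + z0 * z1" using sum prod by simp
    also have "\<dots> = 0" by (simp add: algebra_simps power2_eq_square)
    finally show ?thesis .
  qed
  have nz: "z0 \<noteq> 0" using prod by auto
  have m: "cmod z0 * cmod z1 = 1" using prod by (metis norm_mult norm_one)
  consider "cmod z0 > 1" | "cmod z0 < 1" | "cmod z0 = 1" by linarith
  then show ?thesis
  proof cases
    case 1 then show ?thesis using root0 by blast
  next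
    case 2
    have "cmod z1 > 1"
    proof (rule ccontr)
      assume "\<not> cmod z1 > 1"
      moreover have "z1 \<noteq> 0" using prod by auto
      ultimately have "cmod z0 * cmod z1 < 1 * 1" using 2 by (intro mult_less_le_imp_less) auto
      then show False using m by simp
    qed
    then show ?thesis using root1 by blast
  next
    case 3
    have "z1 = cnj z0"
    proof -
      have "z0 * cnj z0 = 1" using 3 complex_norm_square[of z0] by simp
      then show ?thesis using prod nz by (metis mult_left_cancel)
    qed
    then have "\<tau> = complex_of_real (2 * Re z0)" using sum by (simp add: complex_eq_iff)
    moreover have "\<bar>Re z0\<bar> \<le> 1" using abs_Re_le_cmod[of z0] 3 by simp
    ultimately have False using nr[rule_format, of "2 * Re z0"] by (auto simp: abs_le_iff)
    then show ?thesis ..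
  qed
qed

lemma lam_props:
  assumes "loxodromic g"
  shows "(lam g)^2 - ntr g * lam g + 1 = 0" "cmod (lam g) > 1"
proof -
  have "\<exists>z. z^2 - ntr g * z + 1 = 0 \<and> cmod z > 1"
    by (rule quad_root_exists[OF lox_ntr[OF assms]])
  then have "(lam g)^2 - ntr g * lam g + 1 = 0 \<and> cmod (lam g) > 1"
    unfolding lam_def by (rule someI_ex)
  then show "(lam g)^2 - ntr g * lam g + 1 = 0" "cmod (lam g) > 1" by auto
qed

lemma root_sum:
  fixes z \<tau> :: complex
  assumes "z^2 - \<tau> * z + 1 = 0"
  shows "z \<noteq> 0" "\<tau> = z + 1 / z"
proof -
  show nz: "z \<noteq> 0" by (rule ccontr) (use assms in simp)
  have "z * z + 1 = \<tau> * z" using assms by (simp add: power2_eq_square algebra_simps)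
  then show "\<tau> = z + 1 / z" using nz by (simp add: field_simps)
qed

lemma root_mod_unique:
  fixes w z \<tau> \<tau>' :: complex
  assumes w: "w^2 - \<tau> * w + 1 = 0" "cmod w > 1"
    and z: "z^2 - \<tau>' * z + 1 = 0" "cmod z > 1" and tt: "\<tau>' = \<tau> \<or> \<tau>' = - \<tau>"
  shows "cmod z = cmod w"
proof -
  obtain z' where z': "z'^2 - \<tau> * z' + 1 = 0" "cmod z' = cmod z"
  proof (cases "\<tau>' = \<tau>")
    case True then show ?thesis using that z by blast
  next
    case False
    then have "\<tau>' = - \<tau>" using tt by blast
    then have "(-z)^2 - \<tau> * (-z) + 1 = 0" using z(1) by simp
    then show ?thesis using that[of "-z"] by simp
  qed
  have wnz: "w \<noteq> 0" and ws: "\<tau> = w + 1/w" using root_sum[OF w(1)] by auto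
  have "(z' - w) * (z' - 1/w) = z'^2 - \<tau> * z' + 1"
    unfolding ws using wnz by (simp add: field_simps power2_eq_square)
  then have "(z' - w) * (z' - 1/w) = 0" using z'(1) by simp
  then have "z' = w \<or> z' = 1 / w" by auto
  moreover have "cmod (1 / w) < 1" using w(2) by (simp add: norm_divide divide_less_eq_1)
  ultimately have "z' = w" using z'(2) z(2) by auto
  then show ?thesis using z'(2) by simp
qed

lemma mono_s:
  fixes s R :: real
  assumes "s > 1" "R > 1" "s + 1/s \<ge> R + 1/R"
  shows "s \<ge> R"
proof (rule ccontr)
  assume "\<not> s \<ge> R"
  then have sR: "s < R" by simp
  have "(R + 1/R) - (s + 1/s) = (R - s) * (R * s - 1) / (R * s)"
    using assms(1,2) by (simp add: field_simps)
  moreover have "R * s > 1 * 1" using assms(1,2) by (intro mult_strict_mono) auto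
  moreover have "(R - s) * (R * s - 1) / (R * s) > 0"
    using sR assms(1,2) \<open>R * s > 1 * 1\<close> by (intro divide_pos_pos mult_pos_pos) auto
  ultimately show False using assms(3) by linarith
qed

lemma sq_real_root:
  fixes z :: complex and y :: real
  assumes "z^2 = complex_of_real y" "y \<ge> 0"
  shows "z = complex_of_real (sqrt y) \<or> z = - complex_of_real (sqrt y)"
proof -
  let ?c = "complex_of_real (sqrt y)"
  have "?c^2 = complex_of_real y" using assms(2) by (simp flip: of_real_power)
  then have "(z - ?c) * (z + ?c) = 0" using assms(1) by (simp add: algebra_simps power2_eq_square)
  then show ?thesis by (auto simp: add_eq_0_iff)
qed



lemma angle_bounds:
  fixes \<phi> R :: real
  assumes "0 \<le> \<phi>" "\<phi> < 1/5" "R > 0"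
  shows "0 \<le> R * sin \<phi>" "4 * (R * sin \<phi>) \<le> R * cos \<phi>"
proof -
  have pi3: "pi > 3" by (rule pi_gt3)
  have s0: "sin \<phi> \<ge> 0" using assms pi3 by (intro sin_ge_zero) auto
  then show "0 \<le> R * sin \<phi>" using assms(3) by simp
  have s1: "sin \<phi> \<le> 1/5" using sin_x_le_x[of \<phi>] assms by simp
  have c0: "cos \<phi> \<ge> 0" using assms pi3 by (intro cos_ge_zero) auto
  have "(cos \<phi>)^2 = 1 - (sin \<phi>)^2" by (simp add: cos_squared_eq)
  moreover have "(sin \<phi>)^2 \<le> (1/5)^2" using s0 s1 by (intro power_mono) auto
  ultimately have "(cos \<phi>)^2 \<ge> (4/5)^2" by (simp add: power2_eq_square)
  then have "cos \<phi> \<ge> 4/5" using c0 by (metis abs_le_square_iff abs_of_nonneg zero_le_divide_iff zero_le_numeral)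
  then have "4 * sin \<phi> \<le> cos \<phi>" using s1 by linarith
  then show "4 * (R * sin \<phi>) \<le> R * cos \<phi>" using assms(3)
    by (metis mult.left_commute mult_le_cancel_left_pos)
qed

lemma unit_case:
  fixes n l :: complex and R :: real
  assumes n1: "cmod n = 1" and nre: "Re n \<le> 1/2"
    and R: "R = (cmod l)^2" "R > 100"
    and b0: "0 \<le> Im (l^2)" and ba: "4 * Im (l^2) \<le> Re (l^2)"
  shows "cmod (2 - (l + 1/l)^2 * n) \<ge> R + 1/R"
proof -
  define u where "u = l^2"
  define a b where "a = Re u" "b = Im u"
  have lnz: "l \<noteq> 0" using R by auto
  have cu: "cmod u = R" using R(1) by (simp add: u_def norm_power)
  have ab: "a^2 + b^2 = R^2" using cu by (simp add: a_b_def cmod_power2 flip: cmod_power2)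
  have t2: "(l + 1/l)^2 = u + 2 + 1/u" using lnz by (simp add: u_def field_simps power2_eq_square)
  have nn: "n * cnj n = 1" using complex_norm_square[of n] n1 by simp
  define Z where "Z = u + 1/u + (2 - 2 * cnj n)"
  have "cmod (2 - (l + 1/l)^2 * n) = cmod ((2 - (l + 1/l)^2 * n) * cnj n)"
    using n1 by (simp add: norm_mult)
  also have "(2 - (l + 1/l)^2 * n) * cnj n = 2 * cnj n - (l + 1/l)^2 * (n * cnj n)"
    by (simp add: algebra_simps)
  also have "\<dots> = - Z"
    unfolding nn t2 Z_def by (simp add: algebra_simps)
  finally have eqZ: "cmod (2 - (l + 1/l)^2 * n) = cmod Z" by simp
  have unz: "u \<noteq> 0" using lnz by (simp add: u_def)
  have R2: "(Re u)^2 + (Im u)^2 = R^2" using ab a_b_def by simp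
  have ReZ: "Re Z = a * (1 + 1/R^2) + (2 - 2 * Re n)"
    unfolding Z_def using R2 by (simp add: a_b_def inverse_eq_divide field_simps Re_divide)
  have ImZ: "Im Z = b * (1 - 1/R^2) + 2 * Im n"
    unfolding Z_def using R2 by (simp add: a_b_def inverse_eq_divide field_simps Im_divide)
  have q: "\<bar>2 * Im n\<bar> \<le> 2" using abs_Im_le_cmod[of n] n1 by simp
  have "(R + 1/R)^2 \<le> (Re Z)^2 + (Im Z)^2"
    unfolding ReZ ImZ
    by (rule ineq_unit) (use R ab b0 ba nre q in \<open>auto simp: a_b_def u_def\<close>)
  also have "\<dots> = (cmod Z)^2" by (simp add: cmod_power2)
  finally have "(R + 1/R)^2 \<le> (cmod Z)^2" .
  then have "R + 1/R \<le> cmod Z" by (rule power2_le_imp_le) simp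
  then show ?thesis using eqZ by simp
qed

lemma of_real_Rats_c: "r \<in> \<rat> \<Longrightarrow> complex_of_real r \<in> \<rat>"
  by (auto elim!: Rats_cases simp flip: of_rat_complex)

lemma Ok_int:
  assumes k: "n \<in> imag_quad_field d" and ai: "algebraic_int n"
  shows "\<exists>z::int. 2 * Re n = of_int z" "\<exists>N::int. (cmod n)^2 = of_int N"
proof -
  have ac: "algebraic_int (cnj n)" using ai by simp
  have "algebraic_int (n + cnj n)" by (rule algebraic_int_add[OF ai ac])
  moreover have "n + cnj n = complex_of_real (2 * Re n)" by (simp add: complex_add_cnj)
  moreover have "2 * Re n \<in> \<rat>" using k_Re_rat[OF k] by simp
  ultimately have "complex_of_real (2 * Re n) \<in> \<int>"
    using rational_algebraic_int_is_int of_real_Rats_c by metis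
  then obtain z where "complex_of_real (2 * Re n) = of_int z" by (auto elim: Ints_cases)
  then have "2 * Re n = of_int z" by (metis of_real_eq_iff of_real_of_int_eq)
  then show "\<exists>z::int. 2 * Re n = of_int z" by blast
  have "algebraic_int (n * cnj n)" by (rule algebraic_int_mult[OF ai ac])
  moreover have "n * cnj n = complex_of_real ((cmod n)^2)" by (rule sym, rule complex_norm_square)
  moreover have "(cmod n)^2 \<in> \<rat>" using k_norm_rat[OF k] by simp
  ultimately have "complex_of_real ((cmod n)^2) \<in> \<int>"
    using rational_algebraic_int_is_int of_real_Rats_c by metis
  then obtain N where "complex_of_real ((cmod n)^2) = of_int N" by (auto elim: Ints_cases)
  then have "(cmod n)^2 = of_int N" by (metis of_real_eq_iff of_real_of_int_eq)
  then show "\<exists>N::int. (cmod n)^2 = of_int N" by blast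
qed

lemma key_unit:
  assumes k: "n \<in> imag_quad_field d" and ai: "algebraic_int n" and n0: "n \<noteq> 0" and n1: "n \<noteq> 1"
  shows "(cmod n)^2 \<ge> 2 \<or> (cmod n = 1 \<and> Re n \<le> 1/2)"
proof -
  obtain z :: int where z: "2 * Re n = of_int z" using Ok_int[OF k ai] by blast
  obtain N :: int where N: "(cmod n)^2 = of_int N" using Ok_int[OF k ai] by blast
  have "(cmod n)^2 > 0" using n0 by simp
  then have "N \<ge> 1" using N by simp
  show ?thesis
  proof (cases "N \<ge> 2")
    case True then show ?thesis using N by simp
  next
    case False
    then have "N = 1" using \<open>N \<ge> 1\<close> by simp
    then have c1: "cmod n = 1" using N power2_eq_1_iff[of "cmod n"] norm_ge_zero[of n] by auto
    show ?thesis
    proof (cases "Re n \<le> 1/2")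
      case True then show ?thesis using c1 by simp
    next
      case False
      have "Re n \<le> 1" using abs_Re_le_cmod[of n] c1 by simp
      then have "z = 2" using z False by linarith
      then have re1: "Re n = 1" using z by simp
      have "(Re n)^2 + (Im n)^2 = 1" using c1 by (simp add: cmod_power2 flip: cmod_power2)
      then have "Im n = 0" using re1 by simp
      then have "n = 1" using re1 by (simp add: complex_eq_iff)
      then show ?thesis using n1 by simp
    qed
  qed
qed

lemma det_neg2: "det (- (A::mat2)) = det A"
  by (simp add: det_2)

lemma tr2_neg: "tr2 (- A) = - tr2 A"
  by (simp add: tr2_def)

lemma tr2_sq: "tr2 ((g::mat2) ** g) = (tr2 g)^2 - 2 * det g"
  by (simp add: tr2_def det_2 matrix_matrix_mult_def sum_2 power2_eq_square algebra_simps)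

lemma det_I_plus: "det (mat 1 + smult2 t x) = 1 + t * tr2 x + t^2 * det x"
  by (simp add: det_2 tr2_def smult2_def Finite_Cartesian_Product.mat_def power2_eq_square algebra_simps)

lemma tr_I_plus: "tr2 (mat 1 + smult2 t x) = 2 + t * tr2 x"
  by (simp add: tr2_def smult2_def Finite_Cartesian_Product.mat_def algebra_simps)

lemma smult2_neg: "smult2 c (- A) = - smult2 c A" "smult2 (- c) A = - smult2 c A"
  by (simp_all add: smult2_def Finite_Cartesian_Product.vec_eq_iff)

lemma lox_not: "loxodromic g \<Longrightarrow> -2 \<le> x \<Longrightarrow> x \<le> 2 \<Longrightarrow> tr2 g \<noteq> complex_of_real x"
  unfolding lox_def2 by blast

lemma lam_sq_modulus:
  assumes lox: "loxodromic (g ** g)" and l: "l^2 - ntr g * l + 1 = 0" "cmod l > 1"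
    and dg: "det g = 1"
  shows "cmod (lam (g ** g)) = (cmod l)^2"
proof -
  define t where "t = ntr g"
  have lnz: "l \<noteq> 0" and ts: "t = l + 1/l" using root_sum[OF l(1)] t_def by auto
  have tt: "t^2 = (tr2 g)^2" using ntr_cases[of g] t_def by auto
  have trgg: "tr2 (g ** g) = t^2 - 2" using tr2_sq[of g] dg tt by simp
  have w: "(l^2)^2 - (t^2 - 2) * l^2 + 1 = 0"
    unfolding ts using lnz by (simp add: field_simps power2_eq_square)
  have wm: "cmod (l^2) > 1" using l(2) by (simp add: norm_power one_less_power)
  have "cmod (lam (g ** g)) = cmod (l^2)"
  proof (rule root_mod_unique[OF w wm])
    show "(lam (g ** g))^2 - ntr (g ** g) * lam (g ** g) + 1 = 0" "cmod (lam (g ** g)) > 1"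
      using lam_props[OF lox] by auto
    show "ntr (g ** g) = t^2 - 2 \<or> ntr (g ** g) = - (t^2 - 2)"
      using ntr_cases[of "g ** g"] trgg by auto
  qed
  then show ?thesis by (simp add: norm_power)
qed

theorem proposition7p3:
  fixes d :: nat and k :: "complex set" and B Ord Gt :: "mat2 set"
  assumes "d > 0" and "k = imag_quad_field d"
    and "arith_derived k B Ord Gt"
  shows "\<exists>L \<epsilon>. L > 0 \<and> \<epsilon> > 0 \<and>
    (\<forall>g\<in>Gt. loxodromic g \<and> transl_len g > L \<and> 0 \<le> hol g \<and> hol g < \<epsilon> \<longrightarrow>
       (g ** g \<in> cong_subgroup Ord Gt (ntr g) \<and> loxodromic (g ** g) \<and>
        (\<forall>h\<in>cong_subgroup Ord Gt (ntr g). loxodromic h \<longrightarrow> transl_len (g ** g) \<le> transl_len h)))"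
proof -
  have kdef: "k = imag_quad_field d" by fact
  have Q: "quaternion_subalgebra k B" and ord: "is_order k B Ord"
    and G: "sl2_preimage_group Gt" and GO: "Gt \<subseteq> norm_one Ord"
    using assms(3) unfolding arith_derived_def by auto
  have k01: "0 \<in> k" "1 \<in> k" unfolding kdef by (rule k_0, rule k_1)
  have OrdB: "Ord \<subseteq> B" and ordcl: "\<And>x y. x \<in> Ord \<Longrightarrow> y \<in> Ord \<Longrightarrow> x + y \<in> Ord \<and> x - y \<in> Ord \<and> x ** y \<in> Ord"
    and one: "mat 1 \<in> Ord"
    using ord unfolding is_order_def by auto
  have zero: "0 \<in> Ord" using ordcl[OF one one] by simp
  have negO: "- x \<in> Ord" if "x \<in> Ord" for x using ordcl[OF zero that] by simp
  have Gmul: "\<And>a b. a \<in> Gt \<Longrightarrow> b \<in> Gt \<Longrightarrow> a ** b \<in> Gt" using G unfolding sl2_preimage_group_def by blast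
  have GOrd: "\<And>a. a \<in> Gt \<Longrightarrow> a \<in> Ord \<and> det a = 1" using GO unfolding norm_one_def by auto
  have main: "\<forall>g\<in>Gt. loxodromic g \<and> transl_len g > 2 * ln 10 \<and> 0 \<le> hol g \<and> hol g < 1/5 \<longrightarrow>
       (g ** g \<in> cong_subgroup Ord Gt (ntr g) \<and> loxodromic (g ** g) \<and>
        (\<forall>h\<in>cong_subgroup Ord Gt (ntr g). loxodromic h \<longrightarrow> transl_len (g ** g) \<le> transl_len h))"
  proof (intro ballI impI conjI)
    fix g assume g: "g \<in> Gt"
      and hyp: "loxodromic g \<and> 2 * ln 10 < transl_len g \<and> 0 \<le> hol g \<and> hol g < 1/5"
    then have lox: "loxodromic g" and tl: "2 * ln 10 < transl_len g"
      and h0: "0 \<le> hol g" and h1: "hol g < 1/5" by auto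
    define t l where "t = ntr g" "l = lam g"
    have lp: "l^2 - t * l + 1 = 0" "cmod l > 1" using lam_props[OF lox] t_l_def by auto
    have lnz: "l \<noteq> 0" and ts: "t = l + 1/l" using root_sum[OF lp(1)] by auto
    have "2 * ln 10 < 2 * ln (cmod l)" using tl by (simp add: transl_len_def t_l_def)
    then have "ln 10 < ln (cmod l)" by simp
    then have r10: "cmod l > 10" using lp(2) by (subst (asm) ln_less_cancel_iff) auto
    define R where "R = (cmod l)^2"
    have R100: "R > 100"
    proof -
      have "(10::real)^2 < (cmod l)^2" using r10 by (intro power_strict_mono) auto
      then show ?thesis by (simp add: R_def)
    qed
    have gO: "g \<in> Ord" and dg: "det g = 1" using GOrd[OF g] by auto
    have tcases: "t = tr2 g \<or> t = - tr2 g" using ntr_cases[of g] t_l_def by auto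
    have t0: "t \<noteq> 0"
    proof
      assume "t = 0"
      then have "tr2 g = complex_of_real 0" using tcases by auto
      then show False using lox_not[OF lox, of 0] by simp
    qed
    have CHg: "g ** g = smult2 (tr2 g) g - mat 1" using CH2[of g] dg by simp
    have P1: "g ** g \<in> cong_subgroup Ord Gt t"
    proof -
      have "g ** g \<in> Gt" using Gmul[OF g g] .
      moreover have "- (g ** g) \<in> norm_one_cong Ord t"
      proof -
        have a: "- (g ** g) \<in> Ord" using negO ordcl[OF gO gO] by blast
        have b: "det (- (g ** g)) = 1" by (simp add: det_neg2 det_mul dg)
        have "\<exists>x\<in>Ord. - (g ** g) - mat 1 = smult2 t x"
        proof (cases "t = tr2 g")
          case True
          show ?thesis
            by (rule bexI[of _ "- g"]) (use True CHg negO[OF gO] in \<open>simp_all add: smult2_neg\<close>)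
        next
          case False
          then have "t = - tr2 g" using tcases by simp
          then show ?thesis
            by (intro bexI[of _ g]) (use CHg gO in \<open>simp_all add: smult2_neg\<close>)
        qed
        then show ?thesis using a b unfolding norm_one_cong_def norm_one_def by blast
      qed
      ultimately show ?thesis unfolding cong_subgroup_def by blast
    qed
    have trgg: "tr2 (g ** g) = (tr2 g)^2 - 2" using tr2_sq[of g] dg by simp
    have P2: "loxodromic (g ** g)"
      unfolding lox_def2
    proof (intro allI impI notI)
      fix x :: real assume x: "-2 \<le> x \<and> x \<le> 2" and e: "tr2 (g ** g) = complex_of_real x"
      then have "(tr2 g)^2 = complex_of_real (x + 2)" using trgg by (simp add: algebra_simps eq_diff_eq)
      then have "tr2 g = complex_of_real (sqrt (x + 2)) \<or> tr2 g = - complex_of_real (sqrt (x + 2))"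
        using x by (intro sq_real_root) auto
      then have sq: "tr2 g = complex_of_real (sqrt (x + 2)) \<or> tr2 g = complex_of_real (- sqrt (x + 2))"
        by simp
      have "sqrt (x + 2) \<le> sqrt 4" using x by (intro real_sqrt_le_mono) auto
      then have s2: "sqrt (x + 2) \<le> 2" by simp
      have s0: "sqrt (x + 2) \<ge> 0" using x by simp
      have b1: "-2 \<le> sqrt (x + 2)" "sqrt (x + 2) \<le> 2" "-2 \<le> - sqrt (x + 2)" "- sqrt (x + 2) \<le> 2"
        using s0 s2 by linarith+
      show False
        using sq lox_not[OF lox b1(1,2)] lox_not[OF lox b1(3,4)] by blast
    qed
    have lgg: "cmod (lam (g ** g)) = R"
      using lam_sq_modulus[OF P2 _ _ dg] lp t_l_def R_def by auto
    have tlgg: "transl_len (g ** g) = 2 * ln R" by (simp add: transl_len_def lgg)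
    have tsq: "t^2 = l^2 + 2 + 1 / l^2" unfolding ts using lnz by (simp add: field_simps power2_eq_square)
    have P3: "transl_len (g ** g) \<le> transl_len h"
      if hC: "h \<in> cong_subgroup Ord Gt t" and loxh: "loxodromic h" for h
    proof -
      obtain h' where h': "h' \<in> norm_one_cong Ord t" "tr2 h' = tr2 h \<or> tr2 h' = - tr2 h"
        using hC unfolding cong_subgroup_def by (auto simp: tr2_neg)
      obtain x where x: "x \<in> Ord" "h' - mat 1 = smult2 t x" and dh': "det h' = 1"
        using h'(1) unfolding norm_one_cong_def norm_one_def by auto
      have h'eq: "h' = mat 1 + smult2 t x" using x(2) by (simp add: algebra_simps)
      define n where "n = det x"
      have "1 = 1 + t * tr2 x + t^2 * n" using dh' h'eq det_I_plus n_def by simp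
      then have "t * (tr2 x + t * n) = 0" by (simp add: algebra_simps power2_eq_square)
      then have trx: "tr2 x = - t * n" using t0 by (simp add: add_eq_0_iff)
      have trh': "tr2 h' = 2 - t^2 * n"
        using h'eq tr_I_plus trx by (simp add: power2_eq_square algebra_simps)
      have nk: "n \<in> imag_quad_field d"
        unfolding n_def by (rule quat_det_in_k[of d B]) (use Q kdef x(1) OrdB in auto)
      have nai: "algebraic_int n"
        unfolding n_def by (rule order_det_algint[OF ord k01 x(1)])
      define \<mu> where "\<mu> = lam h"
      have mp: "\<mu>^2 - ntr h * \<mu> + 1 = 0" "cmod \<mu> > 1" using lam_props[OF loxh] \<mu>_def by auto
      define s where "s = cmod \<mu>"
      have tlh: "transl_len h = 2 * ln s" by (simp add: transl_len_def s_def \<mu>_def)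
      have trhn: "cmod (tr2 h) = cmod (2 - t^2 * n)" using h'(2) trh' by (auto simp: norm_minus_commute)
      have trbound: "cmod (tr2 h) \<le> s + 1/s"
      proof -
        have "ntr h = \<mu> + 1/\<mu>" using root_sum[OF mp(1)] by simp
        then have "cmod (ntr h) \<le> cmod \<mu> + cmod (1/\<mu>)" by (simp add: norm_triangle_ineq)
        then show ?thesis using cmod_ntr[of h] by (simp add: s_def norm_divide)
      qed
      have "s \<ge> R"
      proof (cases "n = 1")
        case True
        have w: "(l^2)^2 - (t^2 - 2) * l^2 + 1 = 0"
          unfolding ts using lnz by (simp add: field_simps power2_eq_square)
        have wm: "cmod (l^2) > 1" using lp(2) by (simp add: norm_power one_less_power)
        have e: "tr2 h' = - (t^2 - 2)" using trh' True by simp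
        have "ntr h = tr2 h' \<or> ntr h = - tr2 h'" using ntr_cases[of h] h'(2) by auto
        then have "ntr h = t^2 - 2 \<or> ntr h = - (t^2 - 2)" using e by auto
        then have "cmod \<mu> = cmod (l^2)" by (intro root_mod_unique[OF w wm mp])
        then show ?thesis by (simp add: s_def R_def norm_power)
      next
        case False
        have n0: "n \<noteq> 0"
        proof
          assume "n = 0"
          then have t2: "tr2 h' = 2" using trh' by simp
          have "tr2 h = 2 \<or> tr2 h = -2" using h'(2) t2 by (metis minus_minus)
          then have "tr2 h = complex_of_real 2 \<or> tr2 h = complex_of_real (-2)" by simp
          then show False using lox_not[OF loxh, of 2] lox_not[OF loxh, of "-2"] by auto
        qed
        have big: "cmod (2 - t^2 * n) \<ge> R + 1/R"
        proof (cases "(cmod n)^2 \<ge> 2")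
          case True
          have "cmod (t^2) \<ge> R - 3"
          proof -
            have cl2: "cmod (l^2) = R" by (simp add: R_def norm_power)
            have "cmod (l^2) \<le> cmod (t^2) + cmod (2::complex) + cmod (1 / l^2)"
            proof -
              have "l^2 = t^2 - 2 - 1/l^2" using tsq by simp
              then have "cmod (l^2) = cmod (t^2 - 2 - 1/l^2)" by simp
              also have "\<dots> \<le> cmod (t^2 - 2) + cmod (1/l^2)" by (rule norm_triangle_ineq4)
              also have "cmod (t^2 - 2) \<le> cmod (t^2) + cmod (2::complex)" by (rule norm_triangle_ineq4)
              finally show ?thesis by simp
            qed
            moreover have "cmod (1 / l^2) \<le> 1"
              using lp(2) by (simp add: norm_divide norm_power divide_le_eq_1 one_le_power)
            ultimately show ?thesis using cl2 by simp
          qed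
          then show ?thesis by (rule ineq_big[OF R100 True])
        next
          case False
          then have un: "cmod n = 1" "Re n \<le> 1/2" using key_unit[OF nk nai n0 \<open>n \<noteq> 1\<close>] by auto
          have lrcis: "l^2 = rcis R (hol g)"
          proof -
            have "l = rcis (cmod l) (Arg l)" by (simp add: rcis_cmod_Arg)
            then have "l^2 = rcis ((cmod l)^2) (real 2 * Arg l)" by (metis DeMoivre2)
            then show ?thesis by (simp add: R_def hol_def t_l_def)
          qed
          have ab: "0 \<le> R * sin (hol g)" "4 * (R * sin (hol g)) \<le> R * cos (hol g)"
            using angle_bounds[OF h0 h1, of R] R100 by auto
          show ?thesis
            using unit_case[OF un R_def R100] ab lrcis ts by simp
        qed
        have "s + 1/s \<ge> R + 1/R" using big trhn trbound by linarith
        then show ?thesis using mono_s[of s R] mp(2) R100 s_def by simp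
      qed
      then have "ln R \<le> ln s" using R100 by simp
      then show ?thesis using tlgg tlh by simp
    qed
    show "g ** g \<in> cong_subgroup Ord Gt (ntr g)" using P1 t_l_def by simp
    show "loxodromic (g ** g)" by (rule P2)
    fix h assume "h \<in> cong_subgroup Ord Gt (ntr g)" "loxodromic h"
    then show "transl_len (g ** g) \<le> transl_len h" using P3 t_l_def by simp
  qed
  have p1: "(0::real) < 2 * ln 10" by simp
  have p2: "(0::real) < 1/5" by simp
  show ?thesis using main p1 p2 by blast
qed


end
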